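(* Let $P$ be a finite nonempty set of points lying in a single quadrant $Q$ with respect to the origin $s$, and let $e\neq s$ be such that the line $\overline{se}$ is in the quadrant $Q$ and lies between the two bounding lines, i.e. $\theta_{lb} \le \theta_{s,e} \le \theta_{ub}$. Then, with $d^{\max}=\max_{p\in P} d(p,\overline{se})$, $$d^{\max} \ge d^{lb} := \max\Big\{ \min\{d(l_1,\overline{se}),d(l_2,\overline{se})\},\ \min\{d(u_1,\overline{se}),d(u_2,\overline{se})\},\ D\Big\},$$ where $D = d^{corner\text{-}near}$ if $d(s,e) < d(s,c_f)$ and $D = d^{corner\text{-}far}$ if $d(s,e)\ge d(s,c_f)$; and $$d^{\max} \le d^{ub} := \max\{ d^{intersection},\ d^{corner\text{-}far}\},$$ where $d^{intersection}$ here denotes $\max\{d(l_1,\overline{se}),d(l_2,\overline{se}),d(u_1,\overline{se}),d(u_2,\overline{se})\}$.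
   Context: Bounded Quadrant System (BQS) setup. Points are in the plane with UTM-projected $x$ and $y$ axes, and the start point $s$ is taken as the origin. For a point $p\ne s$, $\theta(p)\in[0,2\pi)$ is the angle between the positive $x$ axis and the vector from $s$ to $p$; $\theta_{s,e}=\theta(e)$. The four quadrants are $Q_k=\{p\neq s: (k-1)\pi/2 \le \theta(p) < k\pi/2\}$, $k=1,\dots,4$; quadrant $Q_k$ has angle range $[\theta^Q_{start},\theta^Q_{end}) = [(k-1)\pi/2,k\pi/2)$. A line $\overline{se}$ is "in" quadrant $Q$ if $\theta^Q_{start}\le \theta_{s,e}<\theta^Q_{end}$. For a finite nonempty $P\subset Q$: the bounding box is the smallest closed axis-parallel rectangle containing $P$, with corners $c_1,\dots,c_4$; $c_n$ and $c_f$ are the corners of the box nearest to and farthest from the origin $s$ (e.g. in the first quadrant $c_n=(x_{\min},y_{\min})$, $c_f=(x_{\max},y_{\max})$). $\theta_{lb}=\min_{p\in P}\theta(p)$ and $\theta_{ub}=\max_{p\in P}\theta(p)$; the lower (resp. upper) bounding line is the ray from $s$ at angle $\theta_{lb}$ (resp. $\theta_{ub}$). $l_1,l_2$ are the intersection points of the lower bounding line with the boundary of the bounding box and $u_1,u_2$ those of the upper bounding line, with index 1 the intersection nearer to $s$ (they may coincide). $d(p,\overline{se})$ is the Euclidean distance from the point $p$ to the line segment from $s$ to $e$. Notation: $d^{corner}=\{d(c_i,\overline{se}): i=1,\dots,4\}$, $d^{corner\text{-}near}=d(c_n,\overline{se})$, $d^{corner\text{-}far}=d(c_f,\overline{se})$,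 $d^{intersection}=\{d(p,\overline{se}): p\in\{l_1,l_2,u_1,u_2\}\}$. *)

theory Defs
  imports "HOL-Analysis.Analysis"
begin

text \<open>Points are pairs (x,y) of reals (UTM-projected coordinates); the start point s is the origin 0.\<close>

type_synonym pt = "real \<times> real"

definition theta :: "pt \<Rightarrow> real" where
  "theta p = Arg2pi (Complex (fst p) (snd p))"

definition quadrant :: "nat \<Rightarrow> pt set" where
  "quadrant k = {p. p \<noteq> 0 \<and> (real k - 1) * pi / 2 \<le> theta p \<and> theta p < real k * pi / 2}"

definition dseg :: "pt \<Rightarrow> pt \<Rightarrow> real" where
  "dseg e p = infdist p (closed_segment 0 e)"

definition xmin :: "pt set \<Rightarrow> real" where "xmin P = Min (fst ` P)"
definition xmax :: "pt set \<Rightarrow> real" where "xmax P = Max (fst ` P)"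
definition ymin :: "pt set \<Rightarrow> real" where "ymin P = Min (snd ` P)"
definition ymax :: "pt set \<Rightarrow> real" where "ymax P = Max (snd ` P)"

definition bbox :: "pt set \<Rightarrow> pt set" where
  "bbox P = {(x, y). xmin P \<le> x \<and> x \<le> xmax P \<and> ymin P \<le> y \<and> y \<le> ymax P}"

text \<open>Corners of the box nearest to / farthest from the origin. Since the box lies in one
  closed quadrant, these are obtained coordinatewise by choosing the coordinate of smaller
  (resp. larger) absolute value; e.g. in Q_1: c_n = (xmin, ymin), c_f = (xmax, ymax).\<close>
definition c_near :: "pt set \<Rightarrow> pt" where
  "c_near P = ((if \<bar>xmin P\<bar> \<le> \<bar>xmax P\<bar> then xmin P else xmax P),
               (if \<bar>ymin P\<bar> \<le> \<bar>ymax P\<bar> then ymin P else ymax P))"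

definition c_far :: "pt set \<Rightarrow> pt" where
  "c_far P = ((if \<bar>xmin P\<bar> \<le> \<bar>xmax P\<bar> then xmax P else xmin P),
              (if \<bar>ymin P\<bar> \<le> \<bar>ymax P\<bar> then ymax P else ymin P))"

definition theta_lb :: "pt set \<Rightarrow> real" where "theta_lb P = Min (theta ` P)"
definition theta_ub :: "pt set \<Rightarrow> real" where "theta_ub P = Max (theta ` P)"

definition dir :: "real \<Rightarrow> pt" where "dir t = (cos t, sin t)"

text \<open>The ray at angle t meets the (convex, compact) bounding box in a segment; its two
  endpoints are the intersection points of the ray with the boundary of the box,
  index 1 being the one nearer to s (they may coincide).\<close>
definition ray_box_near :: "pt set \<Rightarrow> real \<Rightarrow> pt" where
  "ray_box_near P t = Inf {r. 0 \<le> r \<and> r *\<^sub>R dir t \<in> bbox P} *\<^sub>R dir t"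

definition ray_box_far :: "pt set \<Rightarrow> real \<Rightarrow> pt" where
  "ray_box_far P t = Sup {r. 0 \<le> r \<and> r *\<^sub>R dir t \<in> bbox P} *\<^sub>R dir t"

definition l1 :: "pt set \<Rightarrow> pt" where "l1 P = ray_box_near P (theta_lb P)"
definition l2 :: "pt set \<Rightarrow> pt" where "l2 P = ray_box_far P (theta_lb P)"
definition u1 :: "pt set \<Rightarrow> pt" where "u1 P = ray_box_near P (theta_ub P)"
definition u2 :: "pt set \<Rightarrow> pt" where "u2 P = ray_box_far P (theta_ub P)"

definition d_max :: "pt set \<Rightarrow> pt \<Rightarrow> real" where
  "d_max P e = Max (dseg e ` P)"

definition d_lb :: "pt set \<Rightarrow> pt \<Rightarrow> real" where
  "d_lb P e = Max { min (dseg e (l1 P)) (dseg e (l2 P)),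
                    min (dseg e (u1 P)) (dseg e (u2 P)),
                    (if norm e < norm (c_far P) then dseg e (c_near P) else dseg e (c_far P)) }"

definition d_ub :: "pt set \<Rightarrow> pt \<Rightarrow> real" where
  "d_ub P e = Max { dseg e (l1 P), dseg e (l2 P), dseg e (u1 P), dseg e (u2 P),
                    dseg e (c_far P) }"

end

theory Submission
  imports Defs
begin


lemma seg0_mem: "x \<in> closed_segment 0 e \<longleftrightarrow> (\<exists>u. 0 \<le> u \<and> u \<le> 1 \<and> x = u *\<^sub>R e)"
  by (auto simp: in_segment)

lemma dseg_obtain:
  obtains u where "0 \<le> u" "u \<le> 1" "dseg e p = dist p (u *\<^sub>R e)"
proof -
  obtain q where "q \<in> closed_segment 0 e" "infdist p (closed_segment 0 e) = dist p q"
    using infdist_attains_inf[of "closed_segment 0 e" p] by auto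
  then show ?thesis using that unfolding dseg_def seg0_mem by auto
qed

lemma dseg_le: "0 \<le> u \<Longrightarrow> u \<le> 1 \<Longrightarrow> dseg e p \<le> dist p (u *\<^sub>R e)"
  unfolding dseg_def by (rule infdist_le) (auto simp: seg0_mem)

lemma dseg_nonneg: "0 \<le> dseg e p"
  unfolding dseg_def by (rule infdist_nonneg)

lemma dseg_conv:
  assumes "0 \<le> a" "0 \<le> b" "a + b \<le> 1"
  shows "dseg e (a *\<^sub>R p + b *\<^sub>R q) \<le> a * dseg e p + b * dseg e q"
proof -
  obtain u where u: "0 \<le> u" "u \<le> 1" "dseg e p = dist p (u *\<^sub>R e)" by (rule dseg_obtain)
  obtain v where v: "0 \<le> v" "v \<le> 1" "dseg e q = dist q (v *\<^sub>R e)" by (rule dseg_obtain)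
  have w0: "0 \<le> a * u + b * v" using assms u v by simp
  have "a * u + b * v \<le> a + b" using assms u v by (intro add_mono) (auto intro: mult_left_le)
  hence w1: "a * u + b * v \<le> 1" using assms by simp
  have "dseg e (a *\<^sub>R p + b *\<^sub>R q) \<le> dist (a *\<^sub>R p + b *\<^sub>R q) ((a * u + b * v) *\<^sub>R e)"
    by (rule dseg_le[OF w0 w1])
  also have "\<dots> = norm (a *\<^sub>R (p - u *\<^sub>R e) + b *\<^sub>R (q - v *\<^sub>R e))"
    by (simp add: dist_norm algebra_simps)
  also have "\<dots> \<le> norm (a *\<^sub>R (p - u *\<^sub>R e)) + norm (b *\<^sub>R (q - v *\<^sub>R e))"
    by (rule norm_triangle_ineq)
  also have "\<dots> = a * dseg e p + b * dseg e q"
    using assms u v by (simp add: dist_norm)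
  finally show ?thesis .
qed

lemma dseg_conv_max:
  assumes "0 \<le> a" "0 \<le> b" "a + b \<le> 1"
  shows "dseg e (a *\<^sub>R p + b *\<^sub>R q) \<le> max (dseg e p) (dseg e q)"
proof -
  have "a * dseg e p + b * dseg e q \<le> a * max (dseg e p) (dseg e q) + b * max (dseg e p) (dseg e q)"
    using assms by (intro add_mono mult_left_mono) auto
  also have "\<dots> = (a+b) * max (dseg e p) (dseg e q)" by (simp add: algebra_simps)
  also have "\<dots> \<le> max (dseg e p) (dseg e q)"
    using assms dseg_nonneg[of e p] dseg_nonneg[of e q] by (intro mult_left_le_one_le) (auto simp: le_max_iff_disj)
  finally show ?thesis using dseg_conv[OF assms, of e p q] by linarith
qed

lemma dseg_ray:
  assumes "0 \<le> s" "s \<le> 1" shows "dseg e (s *\<^sub>R p) \<le> dseg e p"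
proof -
  have "dseg e 0 = 0" unfolding dseg_def by (rule infdist_zero) (simp add: seg0_mem)
  then show ?thesis
  using dseg_conv_max[OF assms(1) order_refl, of e p 0] assms dseg_nonneg[of e p]
  by simp
qed

lemma dseg_seg:
  assumes "0 \<le> t" "t \<le> 1" shows "dseg e ((1-t) *\<^sub>R p + t *\<^sub>R q) \<le> max (dseg e p) (dseg e q)"
  using dseg_conv_max[of "1-t" t] assms by simp




locale cvx =
  fixes g :: "real \<times> real \<Rightarrow> real"
  assumes conv: "\<And>a b p q. 0 \<le> a \<Longrightarrow> 0 \<le> b \<Longrightarrow> a + b \<le> 1 \<Longrightarrow> g (a *\<^sub>R p + b *\<^sub>R q) \<le> max (g p) (g q)"
begin

lemma seg: "0 \<le> t \<Longrightarrow> t \<le> 1 \<Longrightarrow> g ((1-t) *\<^sub>R p + t *\<^sub>R q) \<le> max (g p) (g q)"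
  using conv[of "1-t" t] by simp

lemma corner:
  assumes "0 \<le> x1" "x1 \<le> x2" "0 \<le> y2" "y2 \<le> y1"
  shows "g (x1,y2) \<le> max (g (x1,y1)) (g (x2,y2))"
proof (cases "x2*y1 - x1*y2 > 0")
  case True
  define D where "D = x2*y1 - x1*y2"
  have D: "D > 0" using True D_def by simp
  define a where "a = y2*(x2-x1)/D"
  define b where "b = x1*(y1-y2)/D"
  have a0: "0 \<le> a" unfolding a_def using assms D by simp
  have b0: "0 \<le> b" unfolding b_def using assms D by simp
  have "a + b = (y2*(x2-x1) + x1*(y1-y2))/D" unfolding a_def b_def by (simp add: add_divide_distrib)
  also have "\<dots> \<le> 1"
  proof -
    have "D - (y2*(x2-x1) + x1*(y1-y2)) = (x2-x1)*(y1-y2)" by (simp add: D_def algebra_simps)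
    moreover have "(x2-x1)*(y1-y2) \<ge> 0" using assms by simp
    ultimately show ?thesis using D by (simp add: divide_le_eq_1)
  qed
  finally have ab: "a + b \<le> 1" .
  have eq: "a *\<^sub>R (x1,y1) + b *\<^sub>R (x2,y2) = (x1,y2)"
  proof -
    have 1: "y2*(x2-x1)*x1 + x1*(y1-y2)*x2 = x1 * D" by (simp add: D_def algebra_simps)
    have 2: "y2*(x2-x1)*y1 + x1*(y1-y2)*y2 = y2 * D" by (simp add: D_def algebra_simps)
    have "a * x1 + b * x2 = x1" unfolding a_def b_def using D 1
      by (simp add: divide_simps; (simp add: algebra_simps)?)
    moreover have "a * y1 + b * y2 = y2" unfolding a_def b_def using D 2
      by (simp add: divide_simps; (simp add: algebra_simps)?)
    ultimately show ?thesis by simp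
  qed
  show ?thesis using conv[OF a0 b0 ab, of "(x1,y1)" "(x2,y2)"] eq by simp
next
  case False
  have "(x1,y2) = (x1,y1) \<or> (x1,y2) = (x2,y2)"
  proof (cases "y1 = y2")
    case False
    hence y1: "y1 > 0" "y2 < y1" using assms by auto
    have "x1 * y2 \<le> x1 * y1" using assms by (intro mult_left_mono) auto
    hence "x2 * y1 \<le> x1 * y1" using False \<open>\<not> x2*y1 - x1*y2 > 0\<close> by linarith
    hence "x2 \<le> x1" using y1 by simp
    thus ?thesis using assms by simp
  qed simp
  then show ?thesis by auto
qed

lemma vert: assumes "y0 \<le> y" "y \<le> y1" shows "g (a, y) \<le> max (g (a,y0)) (g (a,y1))"
proof (cases "y0 = y1")
  case True then show ?thesis using assms by auto
next
  case False
  hence d: "y1 - y0 > 0" using assms by simp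
  define t where "t = (y - y0)/(y1 - y0)"
  have t: "0 \<le> t" "t \<le> 1" unfolding t_def using assms d by auto
  have "(1-t) *\<^sub>R (a,y0) + t *\<^sub>R (a,y1) = (a, y0 + t*(y1-y0))" by (simp add: algebra_simps)
  also have "y0 + t*(y1-y0) = y" unfolding t_def using d by simp
  finally show ?thesis using seg[OF t, of "(a,y0)" "(a,y1)"] by simp
qed

lemma horiz: assumes "x0 \<le> x" "x \<le> x1" shows "g (x, b) \<le> max (g (x0,b)) (g (x1,b))"
proof (cases "x0 = x1")
  case True then show ?thesis using assms by auto
next
  case False
  hence d: "x1 - x0 > 0" using assms by simp
  define t where "t = (x - x0)/(x1 - x0)"
  have t: "0 \<le> t" "t \<le> 1" unfolding t_def using assms d by auto
  have "(1-t) *\<^sub>R (x0,b) + t *\<^sub>R (x1,b) = (x0 + t*(x1-x0), b)" by (simp add: algebra_simps)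
  also have "x0 + t*(x1-x0) = x" unfolding t_def using d by simp
  finally show ?thesis using seg[OF t, of "(x0,b)" "(x1,b)"] by simp
qed

lemma mixed:
  assumes L: "0 \<le> snd L" "snd L \<le> b1" "fst L = a1" "0 < a1"
    and U: "0 \<le> fst U" "fst U \<le> a1" "snd U = b1" "0 < b1"
    and p: "p = \<alpha> *\<^sub>R L + \<beta> *\<^sub>R U" "0 \<le> \<alpha>" "0 \<le> \<beta>" "fst p \<le> a1" "snd p \<le> b1"
  shows "g p \<le> max (g L) (max (g U) (g (a1,b1)))"
proof (cases "\<alpha> + \<beta> \<le> 1")
  case True
  then show ?thesis using conv[OF p(2,3) True, of L U] p(1) by auto
next
  case False
  have py: "snd L \<le> snd p"
  proof -
    have "snd L \<le> (\<alpha> + \<beta>) * snd L" using False L by (simp add: mult_le_cancel_right1)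
    also have "\<dots> \<le> \<alpha> * snd L + \<beta> * b1" using L p by (simp add: algebra_simps mult_left_mono)
    finally show ?thesis using p L U by simp
  qed
  have px: "fst U \<le> fst p"
  proof -
    have "fst U \<le> (\<alpha> + \<beta>) * fst U" using False U by (simp add: mult_le_cancel_right1)
    also have "\<dots> \<le> \<alpha> * a1 + \<beta> * fst U" using U p by (simp add: algebra_simps mult_left_mono)
    finally show ?thesis using p L U by simp
  qed
  have 1: "g (a1, snd p) \<le> max (g L) (g (a1,b1))"
    using vert[OF py p(5), of a1] L by (metis prod.collapse)
  have 2: "g (fst p, b1) \<le> max (g U) (g (a1,b1))"
    using horiz[OF px p(4), of b1] U by (metis prod.collapse)
  have 3: "g (fst p, snd p) \<le> max (g (fst p, b1)) (g (a1, snd p))"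
    by (rule corner) (use px py p L U in auto)
  show ?thesis using 1 2 3 by simp
qed

lemma upper:
  assumes L: "0 \<le> fst L" "fst L \<le> a1" "0 \<le> snd L" "snd L \<le> b1"
    and U: "0 \<le> fst U" "fst U \<le> a1" "0 \<le> snd U" "snd U \<le> b1"
    and farL: "(fst L = a1 \<and> 0 < fst L) \<or> (snd L = b1 \<and> 0 < snd L)"
    and farU: "(fst U = a1 \<and> 0 < fst U) \<or> (snd U = b1 \<and> 0 < snd U)"
    and p: "p = \<alpha> *\<^sub>R L + \<beta> *\<^sub>R U" "0 \<le> \<alpha>" "0 \<le> \<beta>" "fst p \<le> a1" "snd p \<le> b1"
  shows "g p \<le> max (g L) (max (g U) (g (a1,b1)))"
proof -
  have c3: "g p \<le> max (g L) (max (g U) (g (a1,b1)))" if "\<alpha> + \<beta> \<le> 1"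
    using conv[OF p(2,3) that, of L U] p(1) by auto
  consider "fst L = a1 \<and> 0 < fst L" "fst U = a1 \<and> 0 < fst U"
    | "snd L = b1 \<and> 0 < snd L" "snd U = b1 \<and> 0 < snd U"
    | "fst L = a1 \<and> 0 < fst L" "snd U = b1 \<and> 0 < snd U"
    | "snd L = b1 \<and> 0 < snd L" "fst U = a1 \<and> 0 < fst U"
    using farL farU by blast
  then show ?thesis
  proof cases
    case 1
    have "(\<alpha> + \<beta>) * a1 \<le> 1 * a1" using p 1 by (simp add: algebra_simps)
    hence "\<alpha> + \<beta> \<le> 1" using 1 by (simp only: mult_le_cancel_right) auto
    thus ?thesis by (rule c3)
  next
    case 2
    have "(\<alpha> + \<beta>) * b1 \<le> 1 * b1" using p 2 by (simp add: algebra_simps)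
    hence "\<alpha> + \<beta> \<le> 1" using 2 by (simp only: mult_le_cancel_right) auto
    thus ?thesis by (rule c3)
  next
    case 3
    show ?thesis by (rule mixed[where \<alpha>=\<alpha> and \<beta>=\<beta>]) (use L U p 3 in auto)
  next
    case 4
    have "g p \<le> max (g U) (max (g L) (g (a1,b1)))"
      by (rule mixed[where \<alpha>=\<beta> and \<beta>=\<alpha>]) (use L U p 4 in \<open>auto simp: add.commute\<close>)
    then show ?thesis by auto
  qed
qed

end

lemma far_char:
  fixes a0 a1 b0 b1 :: real and L :: "real \<times> real"
  assumes "0 \<le> a0" "0 \<le> b0" "a0 \<le> fst L" "fst L \<le> a1" "b0 \<le> snd L" "snd L \<le> b1"
    and far: "\<And>t. t > 1 \<Longrightarrow> \<not> (a0 \<le> t * fst L \<and> t * fst L \<le> a1 \<and> b0 \<le> t * snd L \<and> t * snd L \<le> b1)"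
  shows "(fst L = a1 \<and> 0 < fst L) \<or> (snd L = b1 \<and> 0 < snd L)"
proof (rule ccontr)
  assume c: "\<not> ?thesis"
  define tx where "tx = (if fst L = 0 then 2 else a1 / fst L)"
  define ty where "ty = (if snd L = 0 then 2 else b1 / snd L)"
  have tx: "tx > 1" "tx * fst L \<le> a1" using c assms unfolding tx_def by (auto simp: field_simps)
  have ty: "ty > 1" "ty * snd L \<le> b1" using c assms unfolding ty_def by (auto simp: field_simps)
  define t where "t = min tx ty"
  have t1: "t > 1" using tx ty t_def by simp
  have "t * fst L \<le> tx * fst L" using assms t_def by (intro mult_right_mono) auto
  moreover have "t * snd L \<le> ty * snd L" using assms t_def by (intro mult_right_mono) auto
  moreover have "fst L \<le> t * fst L" using t1 assms by (simp add: mult_le_cancel_right1)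
  moreover have "snd L \<le> t * snd L" using t1 assms by (simp add: mult_le_cancel_right1)
  ultimately show False using far[OF t1] tx ty assms by linarith
qed




definition cr :: "real \<times> real \<Rightarrow> real \<times> real \<Rightarrow> real" where
  "cr e q = fst e * snd q - snd e * fst q"

lemma norm_pair_sq: "norm (x::real, y::real) = sqrt (x^2 + y^2)"
  by (simp add: norm_Pair)

lemma cr_le: "\<bar>cr e v\<bar> \<le> norm e * norm v"
proof -
  obtain ex ey where e: "e = (ex,ey)" by (cases e)
  obtain wx wy where v: "v = (wx,wy)" by (cases v)
  have "(cr e v)^2 \<le> (ex^2+ey^2)*(wx^2+wy^2)"
  proof -
    have "(ex^2+ey^2)*(wx^2+wy^2) - (cr e v)^2 = (ex*wx + ey*wy)^2"
      by (simp add: cr_def e v power2_eq_square algebra_simps)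
    thus ?thesis by (smt (verit) zero_le_power2)
  qed
  hence "sqrt ((cr e v)^2) \<le> sqrt ((ex^2+ey^2)*(wx^2+wy^2))" by (rule real_sqrt_le_mono)
  thus ?thesis by (simp add: e v norm_pair_sq real_sqrt_mult)
qed

lemma cr_lower: "\<bar>cr e p\<bar> \<le> norm e * dseg e p"
proof -
  obtain u where u: "0 \<le> u" "u \<le> 1" "dseg e p = dist p (u *\<^sub>R e)" by (rule dseg_obtain)
  have "cr e p = cr e (p - u *\<^sub>R e)" by (simp add: cr_def algebra_simps)
  also have "\<bar>\<dots>\<bar> \<le> norm e * norm (p - u *\<^sub>R e)" by (rule cr_le)
  finally show ?thesis using u by (simp add: dist_norm)
qed

lemma cr_upper:
  assumes "e \<noteq> 0" "0 \<le> inner c e" "norm c \<le> norm e"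
  shows "norm e * dseg e c \<le> \<bar>cr e c\<bar>"
proof -
  obtain ex ey where e: "e = (ex,ey)" by (cases e)
  obtain cx cy where c: "c = (cx,cy)" by (cases c)
  define n where "n = ex^2 + ey^2"
  have n: "n > 0" using assms(1) unfolding n_def e by (auto simp: sum_power2_gt_zero_iff zero_prod_def)
  have ne: "norm e = sqrt n" by (simp add: e n_def norm_pair_sq)
  define u where "u = inner c e / n"
  have "inner c e \<le> norm c * norm e" by (rule norm_cauchy_schwarz)
  also have "\<dots> \<le> norm e * norm e" using assms by (simp add: mult_right_mono)
  also have "\<dots> = n" using n by (simp add: ne)
  finally have u1: "u \<le> 1" using n unfolding u_def by simp
  have u0: "0 \<le> u" using n assms unfolding u_def by simp
  have key: "n * ((cx - u*ex)^2 + (cy - u*ey)^2) = (cr e c)^2"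
  proof -
    have ic: "inner c e = cx*ex + cy*ey" by (simp add: c e inner_prod_def)
    have "n * ((cx - u*ex)^2 + (cy - u*ey)^2) = n*(cx^2+cy^2) - 2*u*n*(cx*ex+cy*ey) + u^2*n*n"
      by (simp add: n_def power2_eq_square algebra_simps)
    also have "\<dots> = n*(cx^2+cy^2) - (cx*ex+cy*ey)^2"
      using n by (simp add: u_def ic power2_eq_square field_simps)
    also have "\<dots> = (cr e c)^2" by (simp add: n_def cr_def c e power2_eq_square algebra_simps)
    finally show ?thesis .
  qed
  have "dseg e c \<le> dist c (u *\<^sub>R e)" by (rule dseg_le[OF u0 u1])
  also have "dist c (u *\<^sub>R e) = sqrt ((cx - u*ex)^2 + (cy - u*ey)^2)"
    by (simp add: dist_norm c e norm_pair_sq)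
  finally have "norm e * dseg e c \<le> sqrt n * sqrt ((cx - u*ex)^2 + (cy - u*ey)^2)"
    using ne by (metis mult_left_mono norm_ge_zero)
  also have "\<dots> = sqrt ((cr e c)^2)" using key by (simp add: real_sqrt_mult[symmetric])
  also have "\<dots> = \<bar>cr e c\<bar>" by simp
  finally show ?thesis .
qed

lemma cf_bound:
  assumes "e \<noteq> 0" "0 \<le> inner c e" "norm c \<le> norm e"
    and btw: "(cr e p1 \<le> cr e c \<and> cr e c \<le> cr e p2) \<or> (cr e p2 \<le> cr e c \<and> cr e c \<le> cr e p1)"
  shows "dseg e c \<le> max (dseg e p1) (dseg e p2)"
proof -
  have ne: "norm e > 0" using assms by simp
  have "norm e * dseg e c \<le> \<bar>cr e c\<bar>" by (rule cr_upper[OF assms(1-3)])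
  also have "\<dots> \<le> max \<bar>cr e p1\<bar> \<bar>cr e p2\<bar>" using btw by auto
  also have "\<dots> \<le> max (norm e * dseg e p1) (norm e * dseg e p2)"
    using cr_lower[of e p1] cr_lower[of e p2] by auto
  also have "\<dots> = norm e * max (dseg e p1) (dseg e p2)" using ne by (simp add: max_mult_distrib_left)
  finally show ?thesis using ne by simp
qed




lemma pol: "p = norm p *\<^sub>R dir (theta p)"
proof -
  obtain x y where p: "p = (x,y)" by (cases p)
  have n: "norm p = cmod (Complex x y)" by (simp add: p norm_Pair complex_norm)
  show ?thesis
    using cos_Arg2pi[of "Complex x y"] sin_Arg2pi[of "Complex x y"]
    by (simp add: p n[unfolded p] theta_def dir_def)
qed

lemma theta_range: "p \<in> quadrant k \<Longrightarrow> (real k - 1) * pi / 2 \<le> theta p \<and> theta p < real k * pi / 2"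
  by (simp add: quadrant_def)

definition sx :: "nat \<Rightarrow> real" where "sx k = (if k = 2 \<or> k = 3 then -1 else 1)"
definition sy :: "nat \<Rightarrow> real" where "sy k = (if k \<ge> 3 then -1 else 1)"

lemma cos_sign:
  assumes "k \<in> {1..4}" "(real k - 1) * pi / 2 \<le> t" "t < real k * pi / 2"
  shows "0 \<le> sx k * cos t"
proof -
  have "k = 1 \<or> k = 2 \<or> k = 3 \<or> k = 4" using assms(1) by auto
  then show ?thesis
  proof (elim disjE)
    assume "k = 1" thus ?thesis using assms by (auto simp: sx_def intro!: cos_ge_zero)
  next
    assume k: "k = 2"
    have "0 \<le> cos (t - pi)" using assms k by (intro cos_ge_zero) auto
    thus ?thesis using k by (simp add: sx_def)
  next
    assume k: "k = 3"
    have "0 \<le> cos (t - pi)" using assms k by (intro cos_ge_zero) auto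
    thus ?thesis using k by (simp add: sx_def)
  next
    assume k: "k = 4"
    have "0 \<le> cos (2*pi - t)" using assms k by (intro cos_ge_zero) auto
    thus ?thesis using k by (simp add: sx_def)
  qed
qed

lemma sin_sign:
  assumes "k \<in> {1..4}" "(real k - 1) * pi / 2 \<le> t" "t < real k * pi / 2"
  shows "0 \<le> sy k * sin t"
proof -
  have "k = 1 \<or> k = 2 \<or> k = 3 \<or> k = 4" using assms(1) by auto
  then show ?thesis
  proof (elim disjE)
    assume "k = 1" thus ?thesis using assms by (auto simp: sy_def intro!: sin_ge_zero)
  next
    assume "k = 2" thus ?thesis using assms by (auto simp: sy_def intro!: sin_ge_zero)
  next
    assume k: "k = 3"
    have "sin t \<le> 0" using assms k by (intro sin_le_zero) auto
    thus ?thesis using k by (simp add: sy_def)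
  next
    assume k: "k = 4"
    have "sin t \<le> 0" using assms k by (intro sin_le_zero) auto
    thus ?thesis using k by (simp add: sy_def)
  qed
qed

lemma quad_sign:
  assumes "k \<in> {1..4}" "p \<in> quadrant k"
  shows "0 \<le> sx k * fst p" "0 \<le> sy k * snd p"
proof -
  have r: "(real k - 1) * pi / 2 \<le> theta p" "theta p < real k * pi / 2" using theta_range[OF assms(2)] by auto
  have "fst p = norm p * cos (theta p)" "snd p = norm p * sin (theta p)"
    using pol[of p] by (metis dir_def fst_conv real_scaleR_def scaleR_Pair snd_conv)+
  thus "0 \<le> sx k * fst p" "0 \<le> sy k * snd p"
    using cos_sign[OF assms(1) r] sin_sign[OF assms(1) r]
    by (simp_all add: mult.left_commute[of "sx k"] mult.left_commute[of "sy k"])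
qed

lemma sx_sq: "sx k * sx k = 1" and sy_sq: "sy k * sy k = 1"
  by (auto simp: sx_def sy_def)

definition F :: "nat \<Rightarrow> real \<times> real \<Rightarrow> real \<times> real" where
  "F k q = (sx k * fst q, sy k * snd q)"

lemma FF[simp]: "F k (F k q) = q"
  by (simp add: F_def mult.assoc[symmetric] sx_sq sy_sq)

lemma F_lin: "F k (a *\<^sub>R p + b *\<^sub>R q) = a *\<^sub>R F k p + b *\<^sub>R F k q"
  by (simp add: F_def algebra_simps)

lemma F_scale: "F k (a *\<^sub>R p) = a *\<^sub>R F k p"
  by (simp add: F_def algebra_simps)

lemma dir_decomp:
  assumes "l \<le> p" "p \<le> u" "u - l < pi/2"
  shows "\<exists>a b. 0 \<le> a \<and> 0 \<le> b \<and> dir p = a *\<^sub>R dir l + b *\<^sub>R dir u"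
proof (cases "l = u")
  case True
  then show ?thesis using assms by (intro exI[of _ 1] exI[of _ 0]) auto
next
  case False
  define s where "s = sin (u - l)"
  have s: "s > 0" unfolding s_def using assms False by (intro sin_gt_zero) auto
  have a: "0 \<le> sin (u - p)" using assms by (intro sin_ge_zero) auto
  have b: "0 \<le> sin (p - l)" using assms by (intro sin_ge_zero) auto
  have eq: "s *\<^sub>R dir p = sin (u - p) *\<^sub>R dir l + sin (p - l) *\<^sub>R dir u"
    by (simp add: s_def dir_def sin_diff cos_diff algebra_simps)
  have "dir p = (1/s) *\<^sub>R (s *\<^sub>R dir p)" using s by simp
  also have "\<dots> = (sin (u - p) / s) *\<^sub>R dir l + (sin (p - l) / s) *\<^sub>R dir u"
    unfolding eq by (simp add: scaleR_add_right)
  finally have "dir p = (sin (u - p) / s) *\<^sub>R dir l + (sin (p - l) / s) *\<^sub>R dir u" .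
  thus ?thesis using a b s by (intro exI[of _ "sin (u - p) / s"] exI[of _ "sin (p - l) / s"]) auto
qed




lemma Min_neg: "finite A \<Longrightarrow> A \<noteq> {} \<Longrightarrow> Min ((\<lambda>x. -1 * x) ` A) = - Max (A::real set)"
  by (rule Min_eqI) auto
lemma Max_neg: "finite A \<Longrightarrow> A \<noteq> {} \<Longrightarrow> Max ((\<lambda>x. -1 * x) ` A) = - Min (A::real set)"
  by (rule Max_eqI) auto

lemma sx_cases: "sx k = 1 \<or> sx k = -1" by (simp add: sx_def)
lemma sy_cases: "sy k = 1 \<or> sy k = -1" by (simp add: sy_def)

locale setting =
  fixes P :: "(real \<times> real) set" and e :: "real \<times> real" and k :: nat
  assumes fin: "finite P" and ne: "P \<noteq> {}"
    and k: "k \<in> {1..4}" and PQ: "P \<subseteq> quadrant k"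
    and e0: "e \<noteq> 0" and eQ: "e \<in> quadrant k"
    and lb: "theta_lb P \<le> theta e" and ub: "theta e \<le> theta_ub P"
begin

definition "P' = F k ` P"
definition "a0 = xmin P'"
definition "a1 = xmax P'"
definition "b0 = ymin P'"
definition "b1 = ymax P'"

lemma fin': "finite P'" and ne': "P' \<noteq> {}" using fin ne by (auto simp: P'_def)

lemma P'Q1: "q \<in> P' \<Longrightarrow> 0 \<le> fst q \<and> 0 \<le> snd q"
  using quad_sign[OF k] PQ by (auto simp: P'_def F_def)

lemma P'box: "q \<in> P' \<Longrightarrow> a0 \<le> fst q \<and> fst q \<le> a1 \<and> b0 \<le> snd q \<and> snd q \<le> b1"
  using fin' by (auto simp: a0_def a1_def b0_def b1_def xmin_def xmax_def ymin_def ymax_def)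

lemma a0_nn: "0 \<le> a0" and b0_nn: "0 \<le> b0"
  using fin' ne' P'Q1 by (auto simp: a0_def b0_def xmin_def ymin_def)

lemma a0_in: "\<exists>q\<in>P'. fst q = a0"
proof -
  have "Min (fst ` P') \<in> fst ` P'" by (rule Min_in) (use fin' ne' in auto)
  thus ?thesis unfolding a0_def xmin_def by (metis imageE)
qed
lemma a1_in: "\<exists>q\<in>P'. fst q = a1"
proof -
  have "Max (fst ` P') \<in> fst ` P'" by (rule Max_in) (use fin' ne' in auto)
  thus ?thesis unfolding a1_def xmax_def by (metis imageE)
qed
lemma b0_in: "\<exists>q\<in>P'. snd q = b0"
proof -
  have "Min (snd ` P') \<in> snd ` P'" by (rule Min_in) (use fin' ne' in auto)
  thus ?thesis unfolding b0_def ymin_def by (metis imageE)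
qed
lemma b1_in: "\<exists>q\<in>P'. snd q = b1"
proof -
  have "Max (snd ` P') \<in> snd ` P'" by (rule Max_in) (use fin' ne' in auto)
  thus ?thesis unfolding b1_def ymax_def by (metis imageE)
qed

lemma fstP': "fst ` P' = (\<lambda>x. sx k * x) ` (fst ` P)" by (auto simp: P'_def F_def image_image)
lemma sndP': "snd ` P' = (\<lambda>x. sy k * x) ` (snd ` P)" by (auto simp: P'_def F_def image_image)

lemma xrel: "(sx k = 1 \<and> a0 = xmin P \<and> a1 = xmax P) \<or> (sx k = -1 \<and> a0 = - xmax P \<and> a1 = - xmin P)"
  using sx_cases[of k] fin ne
  by (auto simp: a0_def a1_def xmin_def xmax_def fstP' Min_neg Max_neg)

lemma yrel: "(sy k = 1 \<and> b0 = ymin P \<and> b1 = ymax P) \<or> (sy k = -1 \<and> b0 = - ymax P \<and> b1 = - ymin P)"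
  using sy_cases[of k] fin ne
  by (auto simp: b0_def b1_def ymin_def ymax_def sndP' Min_neg Max_neg)

lemma bbox_iff: "q \<in> bbox P \<longleftrightarrow> (a0 \<le> fst (F k q) \<and> fst (F k q) \<le> a1 \<and> b0 \<le> snd (F k q) \<and> snd (F k q) \<le> b1)"
  using xrel yrel by (auto simp: bbox_def F_def)

lemma P_bbox: "p \<in> P \<Longrightarrow> p \<in> bbox P"
  unfolding bbox_iff using P'box by (auto simp: P'_def)

lemma signP: "p \<in> P \<Longrightarrow> 0 \<le> sx k * fst p \<and> 0 \<le> sy k * snd p"
  using quad_sign[OF k, of p] PQ by blast

lemma xminmax: "sx k = 1 \<Longrightarrow> 0 \<le> xmin P \<and> xmin P \<le> xmax P"
  and xminmax': "sx k = -1 \<Longrightarrow> xmax P \<le> 0 \<and> xmin P \<le> xmax P"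
  and yminmax: "sy k = 1 \<Longrightarrow> 0 \<le> ymin P \<and> ymin P \<le> ymax P"
  and yminmax': "sy k = -1 \<Longrightarrow> ymax P \<le> 0 \<and> ymin P \<le> ymax P"
  using signP fin ne by (auto simp: xmin_def xmax_def ymin_def ymax_def Min_le_iff Max_ge_iff
      Min_ge_iff Max_le_iff ex_in_conv[symmetric])

lemma cfar: "c_far P = F k (a1, b1)"
  using xrel yrel xminmax xminmax' yminmax yminmax'
  by (auto simp: c_far_def F_def)

lemma cnear: "c_near P = F k (a0, b0)"
  using xrel yrel xminmax xminmax' yminmax yminmax'
  by (auto simp: c_near_def F_def)

end



context setting begin

definition "R t = {r. 0 \<le> r \<and> r *\<^sub>R dir t \<in> bbox P}"

lemma near_eq: "ray_box_near P t = Inf (R t) *\<^sub>R dir t"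
  by (simp add: ray_box_near_def R_def)
lemma far_eq: "ray_box_far P t = Sup (R t) *\<^sub>R dir t"
  by (simp add: ray_box_far_def R_def)

lemma pt_pos: "pt \<in> P \<Longrightarrow> norm pt > 0"
  using PQ by (auto simp: quadrant_def)

lemma norm_in_R: "pt \<in> P \<Longrightarrow> norm pt \<in> R (theta pt)"
  using P_bbox[of pt] pol[of pt, symmetric] by (auto simp: R_def)

lemma R_bdd: "bdd_above (R t)"
proof
  fix r assume "r \<in> R t"
  hence r: "0 \<le> r" "xmin P \<le> r * cos t" "r * cos t \<le> xmax P" "ymin P \<le> r * sin t" "r * sin t \<le> ymax P"
    by (auto simp: R_def bbox_def dir_def)
  have "1 \<le> \<bar>cos t\<bar> + \<bar>sin t\<bar>"
  proof -
    have "\<bar>cos t\<bar> * \<bar>cos t\<bar> \<le> \<bar>cos t\<bar> * 1" by (intro mult_left_mono) auto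
    hence "(cos t)^2 \<le> \<bar>cos t\<bar>" by (simp add: power2_eq_square abs_mult_self_eq)
    moreover have "\<bar>sin t\<bar> * \<bar>sin t\<bar> \<le> \<bar>sin t\<bar> * 1" by (intro mult_left_mono) auto
    hence "(sin t)^2 \<le> \<bar>sin t\<bar>" by (simp add: power2_eq_square abs_mult_self_eq)
    ultimately show ?thesis using sin_cos_squared_add[of t] by linarith
  qed
  hence "r \<le> r * (\<bar>cos t\<bar> + \<bar>sin t\<bar>)" using r by (simp add: mult_le_cancel_left1)
  also have "\<dots> = \<bar>r * cos t\<bar> + \<bar>r * sin t\<bar>" using r by (simp add: abs_mult distrib_left)
  also have "\<dots> \<le> (\<bar>xmin P\<bar> + \<bar>xmax P\<bar>) + (\<bar>ymin P\<bar> + \<bar>ymax P\<bar>)" using r by (intro add_mono) auto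
  finally show "r \<le> (\<bar>xmin P\<bar> + \<bar>xmax P\<bar>) + (\<bar>ymin P\<bar> + \<bar>ymax P\<bar>)" .
qed

lemma cl1: "closed {r::real. a \<le> r * c}"
  by (rule closed_Collect_le[OF continuous_on_const continuous_on_mult_right[OF continuous_on_id]])
lemma cl2: "closed {r::real. r * c \<le> a}"
  by (rule closed_Collect_le[OF continuous_on_mult_right[OF continuous_on_id] continuous_on_const])
lemma cl0: "closed {r::real. 0 \<le> r}"
  by (rule closed_Collect_le[OF continuous_on_const continuous_on_id])

lemma R_closed: "closed (R t)"
proof -
  have "R t = {r. 0 \<le> r} \<inter> {r. xmin P \<le> r * cos t} \<inter> {r. r * cos t \<le> xmax P} \<inter> {r. ymin P \<le> r * sin t} \<inter> {r. r * sin t \<le> ymax P}"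
    by (auto simp: R_def bbox_def dir_def)
  also have "closed \<dots>" by (intro closed_Int cl0 cl1 cl2)
  finally show ?thesis .
qed

lemma near_le:
  assumes "pt \<in> P"
  shows "dseg e (ray_box_near P (theta pt)) \<le> dseg e pt"
proof -
  let ?t = "theta pt"
  have n: "norm pt \<in> R ?t" by (rule norm_in_R[OF assms])
  have i0: "0 \<le> Inf (R ?t)"
  proof (rule cInf_greatest)
    show "R ?t \<noteq> {}" using n by auto
  qed (auto simp: R_def)
  have i1: "Inf (R ?t) \<le> norm pt" using n by (intro cInf_lower) (auto simp: R_def intro!: bdd_belowI[of _ 0])
  have p: "norm pt > 0" by (rule pt_pos[OF assms])
  have pp: "norm pt *\<^sub>R dir ?t = pt" by (rule pol[symmetric])
  have "(Inf (R ?t) / norm pt) *\<^sub>R (norm pt *\<^sub>R dir ?t) = Inf (R ?t) *\<^sub>R dir ?t"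
    using p by simp
  hence "ray_box_near P ?t = (Inf (R ?t) / norm pt) *\<^sub>R pt"
    unfolding pp near_eq by simp
  moreover have "dseg e ((Inf (R ?t) / norm pt) *\<^sub>R pt) \<le> dseg e pt"
    using i0 i1 p by (intro dseg_ray) auto
  ultimately show ?thesis by simp
qed

lemma far_props:
  assumes "pt \<in> P"
  defines "L \<equiv> ray_box_far P (theta pt)"
  shows "L \<in> bbox P" "\<And>s. s > 1 \<Longrightarrow> s *\<^sub>R L \<notin> bbox P" "L \<noteq> 0"
    "\<exists>c>0. dir (theta pt) = c *\<^sub>R L"
proof -
  let ?t = "theta pt"
  have n: "norm pt \<in> R ?t" by (rule norm_in_R[OF assms(1)])
  have S: "Sup (R ?t) \<in> R ?t" using n R_bdd R_closed by (intro closed_contains_Sup) auto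
  have S1: "norm pt \<le> Sup (R ?t)" using n R_bdd by (intro cSup_upper) auto
  have Sp: "Sup (R ?t) > 0" using S1 pt_pos[OF assms(1)] by linarith
  show "L \<in> bbox P" using S by (simp add: L_def far_eq R_def)
  show "s *\<^sub>R L \<notin> bbox P" if "s > 1" for s
  proof
    assume "s *\<^sub>R L \<in> bbox P"
    hence "s * Sup (R ?t) \<in> R ?t" using that Sp by (simp add: L_def far_eq R_def)
    hence "s * Sup (R ?t) \<le> Sup (R ?t)" using R_bdd by (intro cSup_upper) auto
    thus False using that Sp by simp
  qed
  have nd: "norm (dir ?t) = 1" by (simp add: dir_def norm_Pair)
  show "L \<noteq> 0" using Sp nd by (auto simp: L_def far_eq)
  show "\<exists>c>0. dir ?t = c *\<^sub>R L"
    using Sp by (intro exI[of _ "1 / Sup (R ?t)"]) (simp add: L_def far_eq)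
qed

end



lemma cr_F: "cr (F k u) (F k v) = sx k * sy k * cr u v"
  by (simp add: cr_def F_def algebra_simps)

lemma inner_F: "inner (F k u) (F k v) = inner u v"
proof -
  have "inner (F k u) (F k v) = (sx k * sx k) * (fst u * fst v) + (sy k * sy k) * (snd u * snd v)"
    by (simp add: F_def inner_prod_def algebra_simps)
  thus ?thesis by (simp add: sx_sq sy_sq inner_prod_def)
qed

context setting begin

lemma g_cvx: "cvx (\<lambda>q. dseg e (F k q))"
proof
  fix a b :: real and p q assume "0 \<le> a" "0 \<le> b" "a + b \<le> 1"
  thus "dseg e (F k (a *\<^sub>R p + b *\<^sub>R q)) \<le> max (dseg e (F k p)) (dseg e (F k q))"
    unfolding F_lin by (rule dseg_conv_max)
qed

interpretation G: cvx "\<lambda>q. dseg e (F k q)" by (rule g_cvx)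

lemma FP': "q \<in> P' \<Longrightarrow> F k q \<in> P" by (auto simp: P'_def)
lemma PF: "p \<in> P \<Longrightarrow> F k p \<in> P'" by (auto simp: P'_def)

lemma le_dmax: "p \<in> P \<Longrightarrow> dseg e p \<le> d_max P e"
  unfolding d_max_def using fin by (intro Max_ge) auto

lemma dmax_in: "\<exists>p\<in>P. d_max P e = dseg e p"
proof -
  have "d_max P e \<in> dseg e ` P" unfolding d_max_def using fin ne by (intro Max_in) auto
  thus ?thesis by auto
qed

lemma lb_in: "\<exists>p\<in>P. theta p = theta_lb P"
proof -
  have "theta_lb P \<in> theta ` P" unfolding theta_lb_def using fin ne by (intro Min_in) auto
  thus ?thesis by auto
qed

lemma ub_in: "\<exists>p\<in>P. theta p = theta_ub P"
proof -
  have "theta_ub P \<in> theta ` P" unfolding theta_ub_def using fin ne by (intro Max_in) auto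
  thus ?thesis by auto
qed

lemma part_l: "min (dseg e (l1 P)) (dseg e (l2 P)) \<le> d_max P e"
proof -
  obtain p where p: "p \<in> P" "theta p = theta_lb P" using lb_in by auto
  have "dseg e (l1 P) \<le> dseg e p" using near_le[OF p(1)] p(2) by (simp add: l1_def)
  thus ?thesis using le_dmax[OF p(1)] by linarith
qed

lemma part_u: "min (dseg e (u1 P)) (dseg e (u2 P)) \<le> d_max P e"
proof -
  obtain p where p: "p \<in> P" "theta p = theta_ub P" using ub_in by auto
  have "dseg e (u1 P) \<le> dseg e p" using near_le[OF p(1)] p(2) by (simp add: u1_def)
  thus ?thesis using le_dmax[OF p(1)] by linarith
qed

lemma part_near: "dseg e (c_near P) \<le> d_max P e"
proof -
  obtain qa where qa: "qa \<in> P'" "fst qa = a0" using a0_in by auto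
  obtain qb where qb: "qb \<in> P'" "snd qb = b0" using b0_in by auto
  have "dseg e (F k (a0, b0)) \<le> max (dseg e (F k (a0, snd qa))) (dseg e (F k (fst qb, b0)))"
    by (rule G.corner[of a0 "fst qb" b0 "snd qa"]) (use a0_nn b0_nn P'box[OF qa(1)] P'box[OF qb(1)] qa qb in auto)
  also have "\<dots> = max (dseg e (F k qa)) (dseg e (F k qb))"
  proof -
    have "(a0, snd qa) = qa" using qa(2) by (cases qa) auto
    moreover have "(fst qb, b0) = qb" using qb(2) by (cases qb) auto
    ultimately show ?thesis by simp
  qed
  also have "\<dots> \<le> d_max P e" using le_dmax[OF FP'[OF qa(1)]] le_dmax[OF FP'[OF qb(1)]] by simp
  finally show ?thesis unfolding cnear .
qed

lemma part_far: assumes "norm (c_far P) \<le> norm e" shows "dseg e (c_far P) \<le> d_max P e"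
proof -
  obtain q1 where q1: "q1 \<in> P'" "fst q1 = a1" using a1_in by auto
  obtain q2 where q2: "q2 \<in> P'" "snd q2 = b1" using b1_in by auto
  define e' where "e' = F k e"
  have ee: "e = F k e'" by (simp add: e'_def)
  have e'0: "0 \<le> fst e'" "0 \<le> snd e'" using quad_sign[OF k eQ] by (auto simp: e'_def F_def)
  have a1n: "0 \<le> a1" and b1n: "0 \<le> b1" using P'Q1[OF q1(1)] P'Q1[OF q2(1)] q1 q2 by auto
  have inn: "0 \<le> inner (c_far P) e"
    unfolding cfar ee inner_F using e'0 a1n b1n by (simp add: inner_prod_def)
  have b1: "cr e' q1 \<le> cr e' (a1,b1)"
    using P'box[OF q1(1)] q1 e'0 by (simp add: cr_def mult_left_mono)
  have b2: "cr e' (a1,b1) \<le> cr e' q2"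
    using P'box[OF q2(1)] q2 e'0 by (simp add: cr_def mult_left_mono)
  have s: "sx k * sy k = 1 \<or> sx k * sy k = -1" using sx_cases[of k] sy_cases[of k] by auto
  have btw: "(cr e (F k q1) \<le> cr e (c_far P) \<and> cr e (c_far P) \<le> cr e (F k q2)) \<or>
             (cr e (F k q2) \<le> cr e (c_far P) \<and> cr e (c_far P) \<le> cr e (F k q1))"
  proof -
    have r: "cr e (F k q) = (sx k * sy k) * cr e' q" for q unfolding ee cr_F by simp
    show ?thesis using s
    proof
      assume "sx k * sy k = 1" thus ?thesis using b1 b2 by (simp add: cfar r)
    next
      assume "sx k * sy k = -1" thus ?thesis using b1 b2 by (simp add: cfar r)
    qed
  qed
  have "dseg e (c_far P) \<le> max (dseg e (F k q1)) (dseg e (F k q2))"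
    by (rule cf_bound[OF e0 inn assms btw])
  also have "\<dots> \<le> d_max P e" using le_dmax[OF FP'[OF q1(1)]] le_dmax[OF FP'[OF q2(1)]] by simp
  finally show ?thesis .
qed

lemma far_Q1:
  assumes "pt \<in> P"
  defines "L \<equiv> F k (ray_box_far P (theta pt))"
  shows "0 \<le> fst L" "fst L \<le> a1" "0 \<le> snd L" "snd L \<le> b1"
    "(fst L = a1 \<and> 0 < fst L) \<or> (snd L = b1 \<and> 0 < snd L)"
proof -
  note fp = far_props[OF assms(1)]
  have inb: "a0 \<le> fst L \<and> fst L \<le> a1 \<and> b0 \<le> snd L \<and> snd L \<le> b1"
    using fp(1) unfolding bbox_iff L_def .
  thus "0 \<le> fst L" "fst L \<le> a1" "0 \<le> snd L" "snd L \<le> b1" using a0_nn b0_nn by auto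
  have nf: "\<not> (a0 \<le> t * fst L \<and> t * fst L \<le> a1 \<and> b0 \<le> t * snd L \<and> t * snd L \<le> b1)"
    if t: "t > 1" for t
  proof -
    have "t *\<^sub>R ray_box_far P (theta pt) \<notin> bbox P" by (rule fp(2)[OF t])
    moreover have e1: "F k (t *\<^sub>R ray_box_far P (theta pt)) = t *\<^sub>R L" unfolding L_def F_scale ..
    ultimately show ?thesis using bbox_iff[of "t *\<^sub>R ray_box_far P (theta pt)"] by simp
  qed
  have i1: "a0 \<le> fst L" and i2: "fst L \<le> a1" and i3: "b0 \<le> snd L" and i4: "snd L \<le> b1"
    using inb by auto
  show "(fst L = a1 \<and> 0 < fst L) \<or> (snd L = b1 \<and> 0 < snd L)"
    by (rule far_char[OF a0_nn b0_nn i1 i2 i3 i4 nf])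
qed

lemma part_upper: "d_max P e \<le> d_ub P e"
proof -
  obtain pm where pm: "pm \<in> P" "d_max P e = dseg e pm" using dmax_in by auto
  obtain pl where pl: "pl \<in> P" "theta pl = theta_lb P" using lb_in by auto
  obtain pu where pu: "pu \<in> P" "theta pu = theta_ub P" using ub_in by auto
  have t1: "theta pl \<le> theta pm"
  proof -
    have "Min (theta ` P) \<le> theta pm" using pm fin by (intro Min_le) auto
    thus ?thesis using pl(2) unfolding theta_lb_def by simp
  qed
  have t2: "theta pm \<le> theta pu"
  proof -
    have "theta pm \<le> Max (theta ` P)" using pm fin by (intro Max_ge) auto
    thus ?thesis using pu(2) unfolding theta_ub_def by simp
  qed
  have t3: "theta pu - theta pl < pi/2"
  proof -
    have "(real k - 1) * pi / 2 \<le> theta pl" "theta pu < real k * pi / 2"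
      using theta_range[of pu k] theta_range[of pl k] PQ pu pl by auto
    moreover have "real k * pi / 2 - (real k - 1) * pi / 2 = pi/2" by (simp add: field_simps)
    ultimately show ?thesis by linarith
  qed
  obtain a b where ab: "0 \<le> a" "0 \<le> b" "dir (theta pm) = a *\<^sub>R dir (theta pl) + b *\<^sub>R dir (theta pu)"
    using dir_decomp[OF t1 t2 t3] by auto
  obtain cl where cl: "cl > 0" "dir (theta pl) = cl *\<^sub>R ray_box_far P (theta pl)"
    using far_props(4)[OF pl(1)] by auto
  obtain cu where cu: "cu > 0" "dir (theta pu) = cu *\<^sub>R ray_box_far P (theta pu)"
    using far_props(4)[OF pu(1)] by auto
  define L where "L = F k (ray_box_far P (theta pl))"
  define U where "U = F k (ray_box_far P (theta pu))"
  have "pm = norm pm *\<^sub>R dir (theta pm)" by (rule pol)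
  also have "\<dots> = (norm pm * a * cl) *\<^sub>R ray_box_far P (theta pl) + (norm pm * b * cu) *\<^sub>R ray_box_far P (theta pu)"
    unfolding ab(3) cl(2) cu(2) by (simp add: scaleR_add_right mult.assoc)
  finally have pmeq: "pm = (norm pm * a * cl) *\<^sub>R ray_box_far P (theta pl) + (norm pm * b * cu) *\<^sub>R ray_box_far P (theta pu)" .
  have decomp: "F k pm = (norm pm * a * cl) *\<^sub>R L + (norm pm * b * cu) *\<^sub>R U"
    using arg_cong[OF pmeq, of "F k"] unfolding F_lin L_def U_def .
  have "dseg e (F k (F k pm)) \<le> max (dseg e (F k L)) (max (dseg e (F k U)) (dseg e (F k (a1, b1))))"
  proof (rule G.upper[of L a1 b1 U "F k pm" "norm pm * a * cl" "norm pm * b * cu"])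
    show "0 \<le> fst L" "fst L \<le> a1" "0 \<le> snd L" "snd L \<le> b1"
      "(fst L = a1 \<and> 0 < fst L) \<or> (snd L = b1 \<and> 0 < snd L)"
      using far_Q1[OF pl(1)] unfolding L_def by auto
    show "0 \<le> fst U" "fst U \<le> a1" "0 \<le> snd U" "snd U \<le> b1"
      "(fst U = a1 \<and> 0 < fst U) \<or> (snd U = b1 \<and> 0 < snd U)"
      using far_Q1[OF pu(1)] unfolding U_def by auto
    show "F k pm = (norm pm * a * cl) *\<^sub>R L + (norm pm * b * cu) *\<^sub>R U" by (rule decomp)
    show "0 \<le> norm pm * a * cl" "0 \<le> norm pm * b * cu" using ab cl cu by auto
    show "fst (F k pm) \<le> a1" "snd (F k pm) \<le> b1" using P'box[OF PF[OF pm(1)]] by auto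
  qed
  hence "dseg e pm \<le> max (dseg e (l2 P)) (max (dseg e (u2 P)) (dseg e (c_far P)))"
    by (simp add: L_def U_def cfar l2_def u2_def pl(2) pu(2))
  thus ?thesis using pm(2) by (simp add: d_ub_def)
qed

lemma main: "d_lb P e \<le> d_max P e \<and> d_max P e \<le> d_ub P e"
proof
  have "(if norm e < norm (c_far P) then dseg e (c_near P) else dseg e (c_far P)) \<le> d_max P e"
    using part_near part_far by auto
  thus "d_lb P e \<le> d_max P e" using part_l part_u by (simp add: d_lb_def)
  show "d_max P e \<le> d_ub P e" by (rule part_upper)
qed

end

theorem theorem3:
  fixes P :: "(real \<times> real) set" and e :: "real \<times> real" and k :: nat
  assumes "finite P" and "P \<noteq> {}"
    and "k \<in> {1..4}" and "P \<subseteq> quadrant k"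
    and "e \<noteq> 0" and "e \<in> quadrant k"
    and "theta_lb P \<le> theta e" and "theta e \<le> theta_ub P"
  shows "d_lb P e \<le> d_max P e \<and> d_max P e \<le> d_ub P e"
proof -
  interpret setting P e k using assms by unfold_locales
  show ?thesis by (rule main)
qed


end
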